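(* Let $f_0\in Y$, $f_0\ge0$, with $\int_{\mathbb R^3}f_0\,dv=1$ and $\mathcal I(f_0|\mathcal M)<\infty$, and let $f(t)=Z_Y(t)f_0$. Then the map $t\mapsto\mathcal I(f(t)|\mathcal M)$ is nonincreasing on $[0,\infty)$ (i.e. $\frac{d}{dt}\mathcal I(f(t)|\mathcal M)\le0$).
   Context: Fix masses $m,m_1>0$, a constant restitution coefficient $\epsilon\in(0,1)$, a bulk velocity $u_1\in\mathbb R^3$ and a temperature $\vartheta_1>0$. Let $\mathcal M_1(v)=\big(\frac{m_1}{2\pi\vartheta_1}\big)^{3/2}\exp\big(-\frac{m_1|v-u_1|^2}{2\vartheta_1}\big)$, $\alpha=\frac{m_1}{m+m_1}$, $\beta=\frac{1-\epsilon}{2}$, $\gamma=\alpha\frac{1-\beta}{1-2\beta}$, $\bar\gamma=(1-\alpha)\frac{1-\beta}{1-2\beta}$, $\vartheta^\#=\frac{(1-\alpha)(1-\beta)}{1-\alpha(1-\beta)}\vartheta_1$, $\mathcal M(v)=\big(\frac{m}{2\pi\vartheta^\#}\big)^{3/2}\exp\big(-\frac{m|v-u_1|^2}{2\vartheta^\#}\big)$. For $v,w\in\mathbb R^3$, $n\in\mathbb S^2$, $q=v-w$, let $v_\star=v-2\gamma(q\cdot n)n$, $w_\star=w+2\bar\gamma(q\cdot n)n$, $\sigma(v)=\int_{\mathbb R^3\times\mathbb S^2}|q\cdot n|\mathcal M_1(w)\,dw\,dn$, and $Q^+f(v)=\epsilon^{-2}\int_{\mathbb R^3\times\mathbb S^2}|q\cdot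 n|f(v_\star)\mathcal M_1(w_\star)\,dw\,dn$. Let $Y=L^1(\mathbb R^3,dv)$ and let $(Z_Y(t))_{t\ge0}$ be the minimal positive contraction $C_0$-semigroup on $Y$ whose generator extends the operator $f\mapsto-\sigma f+Q^+f$ defined on $\{f\in Y:\sigma f\in Y\}$ (the semigroup solving the space-homogeneous linear inelastic Boltzmann equation $\partial_tf=Q^+f-\sigma f$). For nonnegative $f,g\in Y$, the information is $\mathcal I(f|g)=\int_{\mathbb R^3}\big(f\ln f-f\ln g\big)dv$, with conventions $0\ln0=0$ and $x\ln0=-\infty$ for $x>0$. *)

theory Defs
  imports "HOL-Analysis.Analysis"
begin

type_synonym vec3 = "real^3"

definition Maxw :: "real \<Rightarrow> vec3 \<Rightarrow> real \<Rightarrow> vec3 \<Rightarrow> real" where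
  "Maxw ma u th v = (ma / (2 * pi * th)) powr (3/2) * exp (- ma * (norm (v - u))^2 / (2 * th))"

definition alpha_c :: "real \<Rightarrow> real \<Rightarrow> real" where
  "alpha_c m m1 = m1 / (m + m1)"

definition beta_c :: "real \<Rightarrow> real" where
  "beta_c eps = (1 - eps) / 2"

definition gamma_c :: "real \<Rightarrow> real \<Rightarrow> real \<Rightarrow> real" where
  "gamma_c m m1 eps = alpha_c m m1 * (1 - beta_c eps) / (1 - 2 * beta_c eps)"

definition gammabar_c :: "real \<Rightarrow> real \<Rightarrow> real \<Rightarrow> real" where
  "gammabar_c m m1 eps = (1 - alpha_c m m1) * (1 - beta_c eps) / (1 - 2 * beta_c eps)"

definition theta_sharp :: "real \<Rightarrow> real \<Rightarrow> real \<Rightarrow> real \<Rightarrow> real" where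
  "theta_sharp m m1 eps th1 =
     (1 - alpha_c m m1) * (1 - beta_c eps) / (1 - alpha_c m m1 * (1 - beta_c eps)) * th1"

definition M1 :: "real \<Rightarrow> vec3 \<Rightarrow> real \<Rightarrow> vec3 \<Rightarrow> real" where
  "M1 m1 u1 th1 = Maxw m1 u1 th1"

definition Meq :: "real \<Rightarrow> real \<Rightarrow> real \<Rightarrow> vec3 \<Rightarrow> real \<Rightarrow> vec3 \<Rightarrow> real" where
  "Meq m m1 eps u1 th1 = Maxw m u1 (theta_sharp m m1 eps th1)"

text \<open>Standard (non-normalised, total mass 4 pi) surface measure on S^2, realised as the
  cone measure: S(A) = 3 * lambda {r x. x \<in> A, 0 < r \<le> 1}, i.e. the image of
  3 * Lebesgue measure on the unit ball under x \<mapsto> x / |x|.  It is a measure on R^3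
  concentrated on the unit sphere.\<close>
definition sphere_measure :: "vec3 measure" where
  "sphere_measure =
     distr (density lborel (\<lambda>x. ennreal (3 * indicator (ball 0 1) x))) borel
           (\<lambda>x. x /\<^sub>R norm x)"

definition coll_measure :: "(vec3 \<times> vec3) measure" where
  "coll_measure = lborel \<Otimes>\<^sub>M sphere_measure"

definition vstar :: "real \<Rightarrow> real \<Rightarrow> real \<Rightarrow> vec3 \<Rightarrow> vec3 \<Rightarrow> vec3 \<Rightarrow> vec3" where
  "vstar m m1 eps v w n = v - (2 * gamma_c m m1 eps * ((v - w) \<bullet> n)) *\<^sub>R n"

definition wstar :: "real \<Rightarrow> real \<Rightarrow> real \<Rightarrow> vec3 \<Rightarrow> vec3 \<Rightarrow> vec3 \<Rightarrow> vec3" where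
  "wstar m m1 eps v w n = w + (2 * gammabar_c m m1 eps * ((v - w) \<bullet> n)) *\<^sub>R n"

definition sigma_c :: "real \<Rightarrow> vec3 \<Rightarrow> real \<Rightarrow> vec3 \<Rightarrow> real" where
  "sigma_c m1 u1 th1 v =
     (\<integral>p. \<bar>(v - fst p) \<bullet> snd p\<bar> * M1 m1 u1 th1 (fst p) \<partial>coll_measure)"

definition Qplus :: "real \<Rightarrow> real \<Rightarrow> real \<Rightarrow> vec3 \<Rightarrow> real \<Rightarrow> (vec3 \<Rightarrow> real) \<Rightarrow> vec3 \<Rightarrow> real" where
  "Qplus m m1 eps u1 th1 f v = eps powr (-2) *
     (\<integral>p. \<bar>(v - fst p) \<bullet> snd p\<bar> * f (vstar m m1 eps v (fst p) (snd p))
           * M1 m1 u1 th1 (wstar m m1 eps v (fst p) (snd p)) \<partial>coll_measure)"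

text \<open>Elements of Y = L^1(R^3) are represented by integrable functions; equalities and
  inequalities between elements of Y are understood Lebesgue-almost everywhere.
  The L^1 distance is taken in ennreal, so that it is \<infinity> for non-integrable differences.\<close>

definition L1dist :: "(vec3 \<Rightarrow> real) \<Rightarrow> (vec3 \<Rightarrow> real) \<Rightarrow> ennreal" where
  "L1dist f g = (\<integral>\<^sup>+ v. ennreal \<bar>f v - g v\<bar> \<partial>lborel)"

definition L1norm :: "(vec3 \<Rightarrow> real) \<Rightarrow> ennreal" where
  "L1norm f = (\<integral>\<^sup>+ v. ennreal \<bar>f v\<bar> \<partial>lborel)"

definition pos_contr_C0_semigroup :: "(real \<Rightarrow> (vec3 \<Rightarrow> real) \<Rightarrow> (vec3 \<Rightarrow> real)) \<Rightarrow> bool" where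
  "pos_contr_C0_semigroup Z \<longleftrightarrow>
     (\<forall>t\<ge>0. \<forall>f. integrable lborel f \<longrightarrow> integrable lborel (Z t f)) \<and>
     (\<forall>t\<ge>0. \<forall>f g. integrable lborel f \<longrightarrow> integrable lborel g \<longrightarrow>
        (AE v in lborel. f v = g v) \<longrightarrow> (AE v in lborel. Z t f v = Z t g v)) \<and>
     (\<forall>t\<ge>0. \<forall>f g a b. integrable lborel f \<longrightarrow> integrable lborel g \<longrightarrow>
        (AE v in lborel. Z t (\<lambda>x. a * f x + b * g x) v = a * Z t f v + b * Z t g v)) \<and>
     (\<forall>t\<ge>0. \<forall>f. integrable lborel f \<longrightarrow> (AE v in lborel. f v \<ge> 0) \<longrightarrow>
        (AE v in lborel. Z t f v \<ge> 0)) \<and>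
     (\<forall>t\<ge>0. \<forall>f. integrable lborel f \<longrightarrow> L1norm (Z t f) \<le> L1norm f) \<and>
     (\<forall>f. integrable lborel f \<longrightarrow> (AE v in lborel. Z 0 f v = f v)) \<and>
     (\<forall>t\<ge>0. \<forall>s\<ge>0. \<forall>f. integrable lborel f \<longrightarrow>
        (AE v in lborel. Z (t + s) f v = Z t (Z s f) v)) \<and>
     (\<forall>f. integrable lborel f \<longrightarrow> ((\<lambda>t. L1dist (Z t f) f) \<longlongrightarrow> 0) (at_right 0))"

definition generator_extends_A ::
  "real \<Rightarrow> real \<Rightarrow> real \<Rightarrow> vec3 \<Rightarrow> real \<Rightarrow> (real \<Rightarrow> (vec3 \<Rightarrow> real) \<Rightarrow> (vec3 \<Rightarrow> real)) \<Rightarrow> bool" where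
  "generator_extends_A m m1 eps u1 th1 Z \<longleftrightarrow>
     (\<forall>f. integrable lborel f \<longrightarrow> integrable lborel (\<lambda>v. sigma_c m1 u1 th1 v * f v) \<longrightarrow>
        ((\<lambda>t. L1dist (\<lambda>v. (Z t f v - f v) / t)
                      (\<lambda>v. - sigma_c m1 u1 th1 v * f v + Qplus m m1 eps u1 th1 f v))
          \<longlongrightarrow> 0) (at_right 0))"

definition minimal_semigroup ::
  "real \<Rightarrow> real \<Rightarrow> real \<Rightarrow> vec3 \<Rightarrow> real \<Rightarrow> (real \<Rightarrow> (vec3 \<Rightarrow> real) \<Rightarrow> (vec3 \<Rightarrow> real)) \<Rightarrow> bool" where
  "minimal_semigroup m m1 eps u1 th1 Z \<longleftrightarrow>
     pos_contr_C0_semigroup Z \<and> generator_extends_A m m1 eps u1 th1 Z \<and>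
     (\<forall>Z'. pos_contr_C0_semigroup Z' \<and> generator_extends_A m m1 eps u1 th1 Z' \<longrightarrow>
        (\<forall>t\<ge>0. \<forall>f. integrable lborel f \<longrightarrow> (AE v in lborel. f v \<ge> 0) \<longrightarrow>
           (AE v in lborel. Z t f v \<le> Z' t f v)))"

text \<open>Integrand f ln f - f ln g with conventions 0 ln 0 = 0 and x ln 0 = -\<infinity> for x > 0.\<close>
definition info_integrand :: "(vec3 \<Rightarrow> real) \<Rightarrow> (vec3 \<Rightarrow> real) \<Rightarrow> vec3 \<Rightarrow> ereal" where
  "info_integrand f g v =
     (if f v = 0 then 0
      else if g v = 0 then \<infinity>
      else ereal (f v * ln (f v) - f v * ln (g v)))"

definition Info :: "(vec3 \<Rightarrow> real) \<Rightarrow> (vec3 \<Rightarrow> real) \<Rightarrow> ereal" where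
  "Info f g =
     enn2ereal (\<integral>\<^sup>+ v. e2ennreal (max 0 (info_integrand f g v)) \<partial>lborel)
     - enn2ereal (\<integral>\<^sup>+ v. e2ennreal (max 0 (- info_integrand f g v)) \<partial>lborel)"

end

theory Submission
  imports Defs "HOL-Probability.Distributions"
begin

lemma quad_id:
  fixes K K1 a b c d :: real
  assumes "K * c = K1 * d" "c + d = 2"
  shows "K * (a - c * (a - b))^2 + K1 * (b + d * (a - b))^2 = K * a^2 + K1 * b^2"
proof -
  have "K * (a - c * (a - b))^2 + K1 * (b + d * (a - b))^2 - (K * a^2 + K1 * b^2)
     = (a - b) * (- 2 * (K*c) * a + 2 * (K1 * d) * b + ((K*c) * c + (K1*d) * d) * (a - b))"
    by (simp add: power2_eq_square algebra_simps)
  also have "\<dots> = (a - b) * (K*c) * (- 2 * a + 2 * b + (c + d) * (a - b))"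
    using assms(1) by (simp add: algebra_simps)
  also have "\<dots> = 0" using assms(2) by simp
  finally show ?thesis by simp
qed

lemma params:
  assumes "m > 0" "m1 > 0" "0 < eps" "eps < 1" "th1 > 0"
  shows "0 < alpha_c m m1" "alpha_c m m1 < 1" "1 - 2 * beta_c eps = eps"
    "gamma_c m m1 eps = alpha_c m m1 * (1 + eps) / (2 * eps)"
    "gammabar_c m m1 eps = (1 - alpha_c m m1) * (1 + eps) / (2 * eps)"
    "theta_sharp m m1 eps th1 = (1 - alpha_c m m1) * (1 + eps) / (2 - alpha_c m m1 * (1 + eps)) * th1"
    "theta_sharp m m1 eps th1 > 0"
    "2 - alpha_c m m1 * (1 + eps) > 0"
    "m / theta_sharp m m1 eps th1 * (alpha_c m m1 * (1 + eps)) = m1 / th1 * (2 - alpha_c m m1 * (1 + eps))"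
proof -
  show a0: "0 < alpha_c m m1" "alpha_c m m1 < 1" using assms by (auto simp: alpha_c_def)
  show "1 - 2 * beta_c eps = eps" by (simp add: beta_c_def field_simps)
  show "gamma_c m m1 eps = alpha_c m m1 * (1 + eps) / (2 * eps)"
    "gammabar_c m m1 eps = (1 - alpha_c m m1) * (1 + eps) / (2 * eps)"
    by (simp_all add: gamma_c_def gammabar_c_def beta_c_def field_simps)
  have d: "2 - alpha_c m m1 * (1 + eps) > 0"
  proof -
    have "alpha_c m m1 * (1 + eps) < 1 * 2" using a0 assms by (intro mult_strict_mono) auto
    then show ?thesis by simp
  qed
  then show "2 - alpha_c m m1 * (1 + eps) > 0" .
  show ts: "theta_sharp m m1 eps th1 = (1 - alpha_c m m1) * (1 + eps) / (2 - alpha_c m m1 * (1 + eps)) * th1"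
    unfolding theta_sharp_def beta_c_def using d by (simp add: field_simps)
  show "theta_sharp m m1 eps th1 > 0" unfolding ts using a0 d assms by simp
  have "m * alpha_c m m1 = m1 * (1 - alpha_c m m1)" using assms by (simp add: alpha_c_def field_simps)
  moreover have "m / theta_sharp m m1 eps th1 * (alpha_c m m1 * (1 + eps)) = (m * alpha_c m m1) * (2 - alpha_c m m1 * (1 + eps)) / ((1 - alpha_c m m1) * th1)"
  proof -
    have gen0: "\<And>A B E D t::real. B \<noteq> 0 \<Longrightarrow> E \<noteq> 0 \<Longrightarrow> D \<noteq> 0 \<Longrightarrow> t \<noteq> 0 \<Longrightarrow>
       m / (B * E / D * t) * (A * E) = (m * A) * D / (B * t)"
      by (simp add: field_simps)
    have gen: "\<And>A e D t::real. 1 - A \<noteq> 0 \<Longrightarrow> 1 + e \<noteq> 0 \<Longrightarrow> D \<noteq> 0 \<Longrightarrow> t \<noteq> 0 \<Longrightarrow>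
       m / ((1 - A) * (1 + e) / D * t) * (A * (1 + e)) = (m * A) * D / ((1 - A) * t)"
      by (rule gen0)
    show ?thesis unfolding ts by (rule gen) (use a0 d assms in auto)
  qed
  ultimately show "m / theta_sharp m m1 eps th1 * (alpha_c m m1 * (1 + eps)) = m1 / th1 * (2 - alpha_c m m1 * (1 + eps))"
    using a0 by simp
qed

lemma norm_shift_sq:
  fixes x n :: vec3 and t :: real
  assumes "norm n = 1"
  shows "(norm (x - t *\<^sub>R n))^2 = (norm x)^2 - (x \<bullet> n)^2 + (x \<bullet> n - t)^2"
proof -
  have nn: "n \<bullet> n = 1" using assms by (simp add: power2_norm_eq_inner[symmetric])
  show ?thesis
    unfolding power2_norm_eq_inner
    by (simp add: inner_diff_left inner_diff_right nn inner_commute power2_eq_square algebra_simps)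
qed

lemma norm_shift_sq2:
  fixes x n u :: vec3 and t :: real
  assumes "norm n = 1"
  shows "(norm (x - t *\<^sub>R n - u))^2 = (norm (x - u))^2 - ((x - u) \<bullet> n)^2 + ((x - u) \<bullet> n - t)^2"
proof -
  have e: "x - t *\<^sub>R n - u = (x - u) - t *\<^sub>R n" by simp
  show ?thesis unfolding e by (rule norm_shift_sq[OF assms])
qed

lemma maxw_collision:
  assumes "m > 0" "m1 > 0" "0 < eps" "eps < 1" "th1 > 0" "norm n = 1"
  shows "Maxw m u1 (theta_sharp m m1 eps th1) (v - (alpha_c m m1 * (1 + eps) * ((v - w) \<bullet> n)) *\<^sub>R n)
       * Maxw m1 u1 th1 (w + ((2 - alpha_c m m1 * (1 + eps)) * ((v - w) \<bullet> n)) *\<^sub>R n)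
     = Maxw m u1 (theta_sharp m m1 eps th1) v * Maxw m1 u1 th1 w"
proof -
  note P = params[OF assms(1-5)]
  define A where "A = alpha_c m m1"
  define ts where "ts = theta_sharp m m1 eps th1"
  define c where "c = A * (1 + eps)"
  define d where "d = 2 - A * (1 + eps)"
  define a where "a = (v - u1) \<bullet> n"
  define b where "b = (w - u1) \<bullet> n"
  have s: "(v - w) \<bullet> n = a - b" by (simp add: a_def b_def inner_diff_left)
  have ts0: "ts > 0" using P ts_def by simp
  have key: "m / ts * c = m1 / th1 * d" using P unfolding ts_def c_def d_def A_def by simp
  have q: "m / ts * (a - c * (a - b))^2 + m1 / th1 * (b + d * (a - b))^2 = m / ts * a^2 + m1 / th1 * b^2"
    by (rule quad_id) (use key in \<open>auto simp: c_def d_def\<close>)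
  have n1: "(norm (v - (c * (a - b)) *\<^sub>R n - u1))^2 = (norm (v - u1))^2 - a^2 + (a - c * (a - b))^2"
  proof -
    show ?thesis using norm_shift_sq2[OF assms(6), of v "c * (a - b)" u1] unfolding a_def[symmetric] .
  qed
  have n2: "(norm (w + (d * (a - b)) *\<^sub>R n - u1))^2 = (norm (w - u1))^2 - b^2 + (b + d * (a - b))^2"
  proof -
    have e: "w + (d * (a - b)) *\<^sub>R n = w - (- d * (a - b)) *\<^sub>R n" by simp
    have e2: "(b - - d * (a - b))^2 = (b + d * (a - b))^2" by simp
    show ?thesis unfolding e using norm_shift_sq2[OF assms(6), of w "- d * (a - b)" u1] unfolding b_def[symmetric] e2 .
  qed
  have ex: "- m * (norm (v - (c * (a - b)) *\<^sub>R n - u1))^2 / (2 * ts) + - m1 * (norm (w + (d * (a - b)) *\<^sub>R n - u1))^2 / (2 * th1)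
      = - m * (norm (v - u1))^2 / (2 * ts) + - m1 * (norm (w - u1))^2 / (2 * th1)"
  proof -
    have "- m * (norm (v - (c * (a - b)) *\<^sub>R n - u1))^2 / (2 * ts) + - m1 * (norm (w + (d * (a - b)) *\<^sub>R n - u1))^2 / (2 * th1)
       = - (m / ts * ((norm (v - u1))^2 - a^2) + m1 / th1 * ((norm (w - u1))^2 - b^2)
            + (m / ts * (a - c * (a - b))^2 + m1 / th1 * (b + d * (a - b))^2)) / 2"
      unfolding n1 n2 using ts0 assms(5) by (simp add: field_simps)
    also have "\<dots> = - (m / ts * ((norm (v - u1))^2 - a^2) + m1 / th1 * ((norm (w - u1))^2 - b^2)
            + (m / ts * a^2 + m1 / th1 * b^2)) / 2" unfolding q ..
    also have "\<dots> = - m * (norm (v - u1))^2 / (2 * ts) + - m1 * (norm (w - u1))^2 / (2 * th1)"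
      using ts0 assms(5) by (simp add: field_simps)
    finally show ?thesis .
  qed
  have gen: "\<And>X Y. Maxw m u1 ts X * Maxw m1 u1 th1 Y = ((m / (2 * pi * ts)) powr (3/2) * (m1 / (2 * pi * th1)) powr (3/2))
     * exp (- m * (norm (X - u1))^2 / (2 * ts) + - m1 * (norm (Y - u1))^2 / (2 * th1))"
    unfolding Maxw_def exp_add by (simp add: ac_simps)
  show ?thesis
    unfolding s ts_def[symmetric] A_def[symmetric] unfolding d_def[symmetric] unfolding c_def[symmetric] gen ex ..
qed

lemma lborel_linear:
  fixes L :: "real^3 \<Rightarrow> real^3"
  assumes lin: "linear L" and d: "det (matrix L) \<noteq> 0"
  shows "lborel = density (distr lborel borel L) (\<lambda>_. ennreal \<bar>det (matrix L)\<bar>)"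
proof (rule lborel_eqI)
  have inj: "inj L" using det_nz_iff_inj[OF lin] d by simp
  obtain h where h: "linear h" "\<And>x. h (L x) = x" "\<And>x. L (h x) = x"
    using linear_injective_isomorphism[OF lin inj] by metis
  have [measurable]: "L \<in> borel \<rightarrow>\<^sub>M borel"
    using lin by (intro borel_measurable_continuous_onI linear_continuous_on) (simp add: linear_conv_bounded_linear)
  fix l u :: "real^3" assume le: "\<And>b. b \<in> Basis \<Longrightarrow> l \<bullet> b \<le> u \<bullet> b"
  have pre: "L -` box l u = h ` box l u"
    using h by (auto simp: image_iff) (metis)
  have hm: "h ` box l u \<in> lmeasurable"
    using measurable_linear_image[OF h(1)] lmeasurable_open[of "box l u"] by auto
  have "measure lebesgue (box l u) = measure lebesgue (L ` (h ` box l u))"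
    using h by (simp add: image_image)
  also have "\<dots> = \<bar>det (matrix L)\<bar> * measure lebesgue (h ` box l u)"
    by (rule measure_linear_image[OF lin hm])
  finally have eq: "measure lebesgue (box l u) = \<bar>det (matrix L)\<bar> * measure lebesgue (h ` box l u)" .
  have hb: "h ` box l u \<in> sets borel"
    using pre[symmetric] by (metis borel_open open_box measurable_sets[of L borel borel] \<open>L \<in> borel \<rightarrow>\<^sub>M borel\<close> space_borel Int_UNIV_right Int_commute)
  have "emeasure lborel (h ` box l u) = emeasure lebesgue (h ` box l u)"
    using hb by (simp add: emeasure_completion)
  also have "\<dots> = measure lebesgue (h ` box l u)"
    using hm by (simp add: emeasure_eq_measure2)
  finally have e1: "emeasure lborel (h ` box l u) = measure lebesgue (h ` box l u)" .
  have "emeasure (density (distr lborel borel L) (\<lambda>_. ennreal \<bar>det (matrix L)\<bar>)) (box l u)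
      = ennreal \<bar>det (matrix L)\<bar> * emeasure lborel (L -` box l u)"
    by (simp add: emeasure_density nn_integral_cmult_indicator emeasure_distr)
  also have "\<dots> = ennreal (measure lebesgue (box l u))"
    using pre e1 eq by (simp add: ennreal_mult)
  also have "\<dots> = (\<Prod>b\<in>Basis. (u - l) \<bullet> b)"
    using le by (simp add: measure_lborel_box_eq measure_completion)
  finally show "emeasure (density (distr lborel borel L) (\<lambda>_. ennreal \<bar>det (matrix L)\<bar>)) (box l u) = (\<Prod>b\<in>Basis. (u - l) \<bullet> b)" .
qed simp

lemma det_rank1:
  fixes n :: "real^3" and c :: real
  shows "det (matrix (\<lambda>w. w - (c * (w \<bullet> n)) *\<^sub>R n)) = 1 - c * (n \<bullet> n)"
proof -
  have e: "matrix (\<lambda>w. w - (c * (w \<bullet> n)) *\<^sub>R n) $ i $ j = (if i = j then 1 else 0) - c * n$j * n$i" for i j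
    using exhaust_3[of j] by (auto simp: matrix_def axis_def inner_vec_def sum_3)
  show ?thesis
    unfolding det_3 e by (simp add: inner_vec_def sum_3 algebra_simps)
qed

lemma nn_integral_Phi:
  fixes n v :: vec3 and e :: real and g :: "vec3 \<Rightarrow> ennreal"
  assumes n: "norm n = 1" and e: "0 < e" and g[measurable]: "g \<in> borel_measurable borel"
  shows "(\<integral>\<^sup>+ w. g w \<partial>lborel) = ennreal e * (\<integral>\<^sup>+ w. g (w + ((1 - e) * ((v - w) \<bullet> n)) *\<^sub>R n) \<partial>lborel)"
proof -
  define L where "L = (\<lambda>w::vec3. w - ((1 - e) * (w \<bullet> n)) *\<^sub>R n)"
  define t where "t = ((1 - e) * (v \<bullet> n)) *\<^sub>R n"
  have nn: "n \<bullet> n = 1" using n by (simp add: power2_norm_eq_inner[symmetric])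
  have Phi: "w + ((1 - e) * ((v - w) \<bullet> n)) *\<^sub>R n = t + L w" for w
    by (simp add: L_def t_def inner_diff_left algebra_simps scaleR_diff_left)
  have lin: "linear L" unfolding L_def
    by (simp add: linear_iff inner_add_left algebra_simps scaleR_add_left)
  have det: "det (matrix L) = e" unfolding L_def det_rank1 nn by simp
  have [measurable]: "L \<in> borel \<rightarrow>\<^sub>M borel"
    using lin by (intro borel_measurable_continuous_onI linear_continuous_on) (simp add: linear_conv_bounded_linear)
  have "(\<integral>\<^sup>+ w. g w \<partial>lborel) = (\<integral>\<^sup>+ w. g w \<partial>distr lborel borel ((+) t))"
    by (simp add: lborel_distr_plus)
  also have "\<dots> = (\<integral>\<^sup>+ x. g (t + x) \<partial>lborel)"
    by (simp add: nn_integral_distr)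
  also have "\<dots> = (\<integral>\<^sup>+ x. g (t + x) \<partial>density (distr lborel borel L) (\<lambda>_. ennreal \<bar>det (matrix L)\<bar>))"
    using lborel_linear[OF lin] det e by simp
  also have "\<dots> = ennreal e * (\<integral>\<^sup>+ x. g (t + L x) \<partial>lborel)"
    using det e by (simp add: nn_integral_density nn_integral_distr nn_integral_cmult)
  finally show ?thesis by (simp add: Phi)
qed

lemma sets_sphere[simp, measurable_cong]: "sets sphere_measure = sets borel"
  by (simp add: sphere_measure_def)

lemma space_sphere[simp]: "space sphere_measure = UNIV"
  by (simp add: sphere_measure_def)

lemma emeasure_sphere_UNIV: "emeasure sphere_measure UNIV = 3 * emeasure lborel (ball (0::vec3) 1)"
proof -
  have m: "(\<lambda>x::vec3. x /\<^sub>R norm x) \<in> borel_measurable borel" by measurable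
  have "emeasure sphere_measure UNIV = emeasure (density lborel (\<lambda>x::vec3. ennreal (3 * indicator (ball 0 1) x))) UNIV"
    unfolding sphere_measure_def using m by (simp add: emeasure_distr)
  also have "\<dots> = (\<integral>\<^sup>+ x. ennreal 3 * indicator (ball (0::vec3) 1) x \<partial>lborel)"
  proof -
    have [measurable]: "(\<lambda>x::vec3. 3 * indicat_real (ball 0 1) x) \<in> borel_measurable borel" by (intro borel_measurable_times borel_measurable_const borel_measurable_indicator) simp
    show ?thesis by (subst emeasure_density) (auto intro!: nn_integral_cong split: split_indicator)
  qed
  also have "\<dots> = 3 * emeasure lborel (ball (0::vec3) 1)"
    by (simp add: nn_integral_cmult_indicator)
  finally show ?thesis .
qed

lemma finite_sphere: "finite_measure sphere_measure"
proof (rule finite_measureI)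
  have "emeasure lborel (ball (0::vec3) 1) < \<infinity>" by (rule emeasure_lborel_ball_finite)
  then show "emeasure sphere_measure (space sphere_measure) \<noteq> \<infinity>"
    by (simp add: emeasure_sphere_UNIV ennreal_mult_eq_top_iff)
qed

interpretation sphere: finite_measure sphere_measure by (rule finite_sphere)

interpretation coll: pair_sigma_finite lborel sphere_measure
  by (simp add: pair_sigma_finite_def lborel.sigma_finite_measure_axioms sphere.sigma_finite_measure_axioms)

lemma sets_coll': "sets coll_measure = sets (borel \<Otimes>\<^sub>M (borel::vec3 measure))"
  unfolding coll_measure_def by (rule sets_pair_measure_cong) simp_all

lemma coll_meas: "f \<in> borel_measurable (borel \<Otimes>\<^sub>M (borel::vec3 measure)) \<Longrightarrow> f \<in> borel_measurable coll_measure"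
  unfolding measurable_cong_sets[OF sets_coll' refl] .

lemma coll_meas': "f \<in> borel_measurable (borel \<Otimes>\<^sub>M (borel::vec3 measure)) \<Longrightarrow> f \<in> borel_measurable (lborel \<Otimes>\<^sub>M sphere_measure)"
proof -
  have e: "sets (lborel \<Otimes>\<^sub>M sphere_measure) = sets (borel \<Otimes>\<^sub>M (borel::vec3 measure))"
    by (rule sets_pair_measure_cong) simp_all
  show "f \<in> borel_measurable (borel \<Otimes>\<^sub>M (borel::vec3 measure)) \<Longrightarrow> f \<in> borel_measurable (lborel \<Otimes>\<^sub>M sphere_measure)"
    unfolding measurable_cong_sets[OF e refl] .
qed

lemma sets_coll[simp]: "sets coll_measure = sets (borel :: (vec3 \<times> vec3) measure)"
proof -
  have "sets coll_measure = sets (borel \<Otimes>\<^sub>M (borel::vec3 measure))"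
    unfolding coll_measure_def by (rule sets_pair_measure_cong) simp_all
  also have "\<dots> = sets (borel :: (vec3 \<times> vec3) measure)" by (simp only: borel_prod)
  finally show ?thesis .
qed

lemma space_coll[simp]: "space coll_measure = UNIV"
  by (simp add: coll_measure_def space_pair_measure)

lemma AE_sphere: "AE n in sphere_measure. norm n = 1 \<or> n = 0"
proof -
  have m: "(\<lambda>x::vec3. x /\<^sub>R norm x) \<in> measurable (density lborel (\<lambda>x::vec3. ennreal (3 * indicator (ball 0 1) x))) borel" by simp
  have p: "{x \<in> space borel. norm x = 1 \<or> x = (0::vec3)} \<in> sets borel" by measurable
  show ?thesis unfolding sphere_measure_def
    by (subst AE_distr_iff[OF m p]) (auto simp: norm_divide)
qed

lemma Maxw_measurable[measurable]: "Maxw ma u th \<in> borel_measurable borel"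
  unfolding Maxw_def[abs_def] by measurable

lemma Maxw_pos: "ma > 0 \<Longrightarrow> th > 0 \<Longrightarrow> Maxw ma u th v > 0"
  unfolding Maxw_def by simp


lemma inner_identity:
  assumes prm: "m > 0" "m1 > 0" "0 < eps" "eps < 1" "th1 > 0" and n: "norm n = 1"
  shows "(\<integral>\<^sup>+ w. ennreal (\<bar>(v - w) \<bullet> n\<bar> * Meq m m1 eps u1 th1 (vstar m m1 eps v w n) * M1 m1 u1 th1 (wstar m m1 eps v w n)) \<partial>lborel)
   = ennreal (eps^2) * (\<integral>\<^sup>+ w. ennreal (Meq m m1 eps u1 th1 v * (\<bar>(v - w) \<bullet> n\<bar> * M1 m1 u1 th1 w)) \<partial>lborel)"
proof -
  note P = params[OF prm]
  define A where "A = alpha_c m m1"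
  have nn: "n \<bullet> n = 1" using n by (simp add: power2_norm_eq_inner[symmetric])
  have g[measurable]: "(\<lambda>w. ennreal (\<bar>(v - w) \<bullet> n\<bar> * Meq m m1 eps u1 th1 (vstar m m1 eps v w n) * M1 m1 u1 th1 (wstar m m1 eps v w n))) \<in> borel_measurable borel"
    unfolding Meq_def M1_def vstar_def wstar_def by measurable
  have pt: "\<bar>(v - W) \<bullet> n\<bar> * Meq m m1 eps u1 th1 (vstar m m1 eps v W n) * M1 m1 u1 th1 (wstar m m1 eps v W n)
      = eps * (Meq m m1 eps u1 th1 v * (\<bar>(v - w) \<bullet> n\<bar> * M1 m1 u1 th1 w))"
    if W: "W = w + ((1 - eps) * ((v - w) \<bullet> n)) *\<^sub>R n" for w W
  proof -
    define s where "s = (v - w) \<bullet> n"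
    have s1: "(v - W) \<bullet> n = eps * s" unfolding W s_def
      by (simp add: inner_diff_left nn algebra_simps)
    have g1: "2 * gamma_c m m1 eps * (eps * s) = A * (1 + eps) * s"
      unfolding P(4) A_def using prm by (simp add: field_simps)
    have g2: "(1 - eps) * s + 2 * gammabar_c m m1 eps * (eps * s) = (2 - A * (1 + eps)) * s"
      unfolding P(5) A_def using prm by (simp add: field_simps)
    have vs: "vstar m m1 eps v W n = v - (A * (1 + eps) * s) *\<^sub>R n"
      unfolding vstar_def s1 g1 ..
    have ws: "wstar m m1 eps v W n = w + ((2 - A * (1 + eps)) * s) *\<^sub>R n"
    proof -
      have "wstar m m1 eps v W n = W + (2 * gammabar_c m m1 eps * (eps * s)) *\<^sub>R n"
        unfolding wstar_def s1 ..
      also have "\<dots> = w + ((1 - eps) * s + 2 * gammabar_c m m1 eps * (eps * s)) *\<^sub>R n"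
        unfolding W s_def by (simp add: scaleR_add_left)
      finally show ?thesis unfolding g2 .
    qed
    have mc: "Meq m m1 eps u1 th1 (vstar m m1 eps v W n) * M1 m1 u1 th1 (wstar m m1 eps v W n)
       = Meq m m1 eps u1 th1 v * M1 m1 u1 th1 w"
      unfolding vs ws Meq_def M1_def A_def s_def by (rule maxw_collision[OF prm n])
    show ?thesis unfolding s1 using mc prm s_def
      by (simp add: abs_mult ac_simps)
  qed
  have "(\<integral>\<^sup>+ w. ennreal (\<bar>(v - w) \<bullet> n\<bar> * Meq m m1 eps u1 th1 (vstar m m1 eps v w n) * M1 m1 u1 th1 (wstar m m1 eps v w n)) \<partial>lborel)
     = ennreal eps * (\<integral>\<^sup>+ w. ennreal (eps * (Meq m m1 eps u1 th1 v * (\<bar>(v - w) \<bullet> n\<bar> * M1 m1 u1 th1 w))) \<partial>lborel)"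
    by (subst nn_integral_Phi[OF n prm(3) g, of v]) (simp add: pt)
  also have "\<dots> = ennreal eps * (ennreal eps * (\<integral>\<^sup>+ w. ennreal (Meq m m1 eps u1 th1 v * (\<bar>(v - w) \<bullet> n\<bar> * M1 m1 u1 th1 w)) \<partial>lborel))"
  proof -
    have nnM: "Meq m m1 eps u1 th1 v * (\<bar>(v - w) \<bullet> n\<bar> * M1 m1 u1 th1 w) \<ge> 0" for w
      using Maxw_pos[of m "theta_sharp m m1 eps th1"] Maxw_pos[of m1 th1] P prm
      unfolding Meq_def M1_def by (simp add: less_imp_le)
    have e: "ennreal (eps * (Meq m m1 eps u1 th1 v * (\<bar>(v - w) \<bullet> n\<bar> * M1 m1 u1 th1 w)))
      = ennreal eps * ennreal (Meq m m1 eps u1 th1 v * (\<bar>(v - w) \<bullet> n\<bar> * M1 m1 u1 th1 w))" for w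
      using nnM[of w] prm by (simp add: ennreal_mult)
    have [measurable]: "(\<lambda>w. ennreal (Meq m m1 eps u1 th1 v * (\<bar>(v - w) \<bullet> n\<bar> * M1 m1 u1 th1 w))) \<in> borel_measurable borel"
      unfolding Meq_def M1_def by measurable
    show ?thesis unfolding e by (simp add: nn_integral_cmult)
  qed
  also have "\<dots> = ennreal (eps^2) * (\<integral>\<^sup>+ w. ennreal (Meq m m1 eps u1 th1 v * (\<bar>(v - w) \<bullet> n\<bar> * M1 m1 u1 th1 w)) \<partial>lborel)"
    using prm by (simp add: ennreal_mult power2_eq_square mult.assoc)
  finally show ?thesis .
qed

lemma Qplus_Meq:
  assumes prm: "m > 0" "m1 > 0" "0 < eps" "eps < 1" "th1 > 0"
  shows "Qplus m m1 eps u1 th1 (Meq m m1 eps u1 th1) v = sigma_c m1 u1 th1 v * Meq m m1 eps u1 th1 v"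
proof -
  note P = params[OF prm]
  define F where "F = (\<lambda>p::vec3\<times>vec3. \<bar>(v - fst p) \<bullet> snd p\<bar> * Meq m m1 eps u1 th1 (vstar m m1 eps v (fst p) (snd p))
           * M1 m1 u1 th1 (wstar m m1 eps v (fst p) (snd p)))"
  define G where "G = (\<lambda>p::vec3\<times>vec3. Meq m m1 eps u1 th1 v * (\<bar>(v - fst p) \<bullet> snd p\<bar> * M1 m1 u1 th1 (fst p)))"
  have Mpos: "Meq m m1 eps u1 th1 x > 0" "M1 m1 u1 th1 x > 0" for x
    using Maxw_pos[of m "theta_sharp m m1 eps th1"] Maxw_pos[of m1 th1] P prm
    unfolding Meq_def M1_def by auto
  have Fnn: "F p \<ge> 0" for p unfolding F_def using Mpos by (simp add: less_imp_le)
  have Gnn: "G p \<ge> 0" for p unfolding G_def using Mpos by (simp add: less_imp_le)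
  have Fb[measurable]: "F \<in> borel_measurable (borel \<Otimes>\<^sub>M (borel::vec3 measure))"
    unfolding F_def Meq_def M1_def vstar_def wstar_def by measurable
  have Gb[measurable]: "G \<in> borel_measurable (borel \<Otimes>\<^sub>M (borel::vec3 measure))"
    unfolding G_def Meq_def M1_def by measurable
  have Fm[measurable]: "F \<in> borel_measurable coll_measure" by (rule coll_meas) measurable
  have Gm[measurable]: "G \<in> borel_measurable coll_measure" by (rule coll_meas) measurable
  have Fm'[measurable]: "(\<lambda>p. ennreal (F p)) \<in> borel_measurable (lborel \<Otimes>\<^sub>M sphere_measure)"
    by (rule coll_meas') measurable
  have Gm'[measurable]: "(\<lambda>p. ennreal (G p)) \<in> borel_measurable (lborel \<Otimes>\<^sub>M sphere_measure)"
    by (rule coll_meas') measurable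
  have "(\<integral>\<^sup>+ p. ennreal (F p) \<partial>coll_measure) = (\<integral>\<^sup>+ n. \<integral>\<^sup>+ w. ennreal (F (w, n)) \<partial>lborel \<partial>sphere_measure)"
    unfolding coll_measure_def by (rule coll.nn_integral_snd[symmetric]) simp
  also have "\<dots> = (\<integral>\<^sup>+ n. ennreal (eps^2) * (\<integral>\<^sup>+ w. ennreal (G (w, n)) \<partial>lborel) \<partial>sphere_measure)"
  proof (rule nn_integral_cong_AE)
    show "AE n in sphere_measure. (\<integral>\<^sup>+ w. ennreal (F (w, n)) \<partial>lborel) = ennreal (eps^2) * (\<integral>\<^sup>+ w. ennreal (G (w, n)) \<partial>lborel)"
      using AE_sphere
    proof eventually_elim
      case (elim n)
      then show ?case
      proof
        assume "norm n = 1"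
        then show ?thesis unfolding F_def G_def using inner_identity[OF prm] by simp
      next
        assume "n = 0"
        then show ?thesis unfolding F_def G_def by simp
      qed
    qed
  qed
  also have "\<dots> = ennreal (eps^2) * (\<integral>\<^sup>+ n. \<integral>\<^sup>+ w. ennreal (G (w, n)) \<partial>lborel \<partial>sphere_measure)"
    by (rule nn_integral_cmult) measurable
  also have "(\<integral>\<^sup>+ n. \<integral>\<^sup>+ w. ennreal (G (w, n)) \<partial>lborel \<partial>sphere_measure) = (\<integral>\<^sup>+ p. ennreal (G p) \<partial>coll_measure)"
    unfolding coll_measure_def by (rule coll.nn_integral_snd) simp
  finally have eq: "(\<integral>\<^sup>+ p. ennreal (F p) \<partial>coll_measure) = ennreal (eps^2) * (\<integral>\<^sup>+ p. ennreal (G p) \<partial>coll_measure)" .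
  have "Qplus m m1 eps u1 th1 (Meq m m1 eps u1 th1) v = eps powr (-2) * integral\<^sup>L coll_measure F"
    unfolding Qplus_def F_def ..
  also have "\<dots> = eps powr (-2) * enn2real (\<integral>\<^sup>+ p. ennreal (F p) \<partial>coll_measure)"
    using Fnn by (subst integral_eq_nn_integral) auto
  also have "\<dots> = eps powr (-2) * eps^2 * enn2real (\<integral>\<^sup>+ p. ennreal (G p) \<partial>coll_measure)"
    unfolding eq using prm by (simp add: enn2real_mult)
  also have "eps powr (-2) * eps^2 = 1"
  proof -
    have "eps powr (-2) = inverse (eps powr 2)" by (simp add: powr_minus)
    also have "eps powr 2 = eps^2" using prm by (simp add: powr_numeral)
    finally show ?thesis using prm by simp
  qed
  also have "enn2real (\<integral>\<^sup>+ p. ennreal (G p) \<partial>coll_measure) = integral\<^sup>L coll_measure G"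
    using Gnn by (subst integral_eq_nn_integral) auto
  also have "integral\<^sup>L coll_measure G = Meq m m1 eps u1 th1 v * sigma_c m1 u1 th1 v"
    unfolding G_def sigma_c_def by (rule integral_mult_right_zero)
  finally show ?thesis by (simp add: mult.commute)
qed

lemma gauss1_finite:
  fixes c :: real assumes c: "c > 0"
  shows "(\<integral>\<^sup>+ t. ennreal (exp (- c * t^2)) \<partial>lborel) < \<infinity>"
proof -
  define s where "s = sqrt (1 / (2 * c))"
  have s0: "s > 0" using c by (simp add: s_def)
  have s2: "2 * s^2 = 1 / c" using c by (simp add: s_def)
  define K where "K = 1 / sqrt (2 * pi * s^2)"
  have K0: "K > 0" using s0 by (simp add: K_def)
  have eq: "exp (- c * t^2) = normal_density 0 s t / K" for t
    unfolding normal_density_def K_def using c s2 K0 s0 by (simp add: field_simps)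
  have "integrable lborel (\<lambda>t. normal_density 0 s t / K)"
    by (intro integrable_divide integrable_normal_density s0)
  then have "integrable lborel (\<lambda>t. exp (- c * t^2))" unfolding eq .
  then have "(\<integral>\<^sup>+ t. ennreal (exp (- c * t^2)) \<partial>lborel) \<noteq> \<infinity>"
    by (rule integrableD)
  then show ?thesis by (simp add: less_top)
qed

lemma gauss3_finite:
  fixes c :: real assumes c: "c > 0"
  shows "(\<integral>\<^sup>+ x. ennreal (exp (- c * (norm (x::vec3))^2)) \<partial>lborel) < \<infinity>"
proof -
  have eq: "ennreal (exp (- c * (norm x)^2)) = (\<Prod>b\<in>Basis. ennreal (exp (- c * (x \<bullet> b)^2)))" for x :: vec3
  proof -
    have "(norm x)^2 = (\<Sum>b\<in>Basis. (x \<bullet> b)^2)"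
      unfolding power2_norm_eq_inner by (subst euclidean_inner) (simp add: power2_eq_square)
    then have "exp (- c * (norm x)^2) = (\<Prod>b\<in>Basis. exp (- c * (x \<bullet> b)^2))"
      by (simp add: sum_distrib_left exp_sum)
    then show ?thesis by (simp add: prod_ennreal)
  qed
  have "(\<integral>\<^sup>+ x. ennreal (exp (- c * (norm (x::vec3))^2)) \<partial>lborel)
      = (\<Prod>b\<in>(Basis::vec3 set). (\<integral>\<^sup>+ t. ennreal (exp (- c * t^2)) \<partial>lborel))"
    unfolding eq by (rule nn_integral_lborel_prod) auto
  also have "\<dots> < \<infinity>"
    using gauss1_finite[OF c] by (simp add: power_less_top_ennreal)
  finally show ?thesis .
qed

lemma gauss3_integrable:
  fixes c :: real assumes c: "c > 0"
  shows "integrable lborel (\<lambda>x::vec3. exp (- c * (norm x)^2))"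
  using gauss3_finite[OF c] by (intro integrableI_bounded) auto

lemma maxw_moment_bound:
  fixes ma th :: real and u v :: vec3
  assumes ma: "ma > 0" and th: "th > 0"
  defines "k \<equiv> ma / (2 * th)"
  shows "(1 + norm v) * Maxw ma u th v \<le>
     ((ma / (2 * pi * th)) powr (3/2) * (2 + 4 / k) * exp (k * (norm u)^2)) * exp (- (k / 4) * (norm v)^2)"
proof -
  have k: "k > 0" using ma th by (simp add: k_def)
  define C where "C = (ma / (2 * pi * th)) powr (3/2)"
  have C: "C > 0" using ma th by (simp add: C_def)
  have M: "Maxw ma u th v = C * exp (- k * (norm (v - u))^2)"
    unfolding Maxw_def C_def k_def by (simp add: field_simps)
  have a: "(norm v)^2 \<le> 2 * (norm (v - u))^2 + 2 * (norm u)^2"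
  proof -
    have "norm v \<le> norm (v - u) + norm u" using norm_triangle_ineq[of "v - u" u] by simp
    then have "(norm v)^2 \<le> (norm (v - u) + norm u)^2" by (simp add: power_mono)
    also have "\<dots> \<le> 2 * (norm (v - u))^2 + 2 * (norm u)^2"
      using sum_squares_ge_zero[of "norm (v - u) - norm u" 0] by (simp add: power2_eq_square algebra_simps)
    finally show ?thesis .
  qed
  have a': "- k * (norm (v - u))^2 \<le> - (k/2) * (norm v)^2 + k * (norm u)^2"
    using mult_left_mono[OF a, of "k/2"] k by (simp add: algebra_simps)
  have "2 * norm v \<le> 1 + (norm v)^2"
    using sum_squares_ge_zero[of "norm v - 1" 0] by (simp add: power2_eq_square algebra_simps)
  then have b1: "1 + norm v \<le> 2 + (norm v)^2" using norm_ge_zero[of v] by linarith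
  have b2: "2 + (norm v)^2 \<le> (2 + 4 / k) * (1 + k / 4 * (norm v)^2)"
    using k by (simp add: field_simps)
  have b3: "1 + k / 4 * (norm v)^2 \<le> exp (k / 4 * (norm v)^2)" by (rule exp_ge_add_one_self_aux) (use k in simp)
  have b: "1 + norm v \<le> (2 + 4 / k) * exp (k / 4 * (norm v)^2)"
  proof -
    have "0 \<le> 2 + 4 / k" using k by simp
    then show ?thesis using b1 b2 mult_left_mono[OF b3, of "2 + 4/k"] by linarith
  qed
  have "(1 + norm v) * Maxw ma u th v = C * ((1 + norm v) * exp (- k * (norm (v - u))^2))"
    unfolding M by simp
  also have "\<dots> \<le> C * (((2 + 4 / k) * exp (k / 4 * (norm v)^2)) * exp (- (k/2) * (norm v)^2 + k * (norm u)^2))"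
    using C b a' k by (intro mult_left_mono mult_mono) (auto simp: add_pos_nonneg)
  also have "\<dots> = (C * (2 + 4 / k) * exp (k * (norm u)^2)) * exp (- (k / 4) * (norm v)^2)"
  proof -
    have "exp (k / 4 * (norm v)^2) * exp (- (k/2) * (norm v)^2 + k * (norm u)^2) = exp (k * (norm u)^2) * exp (- (k / 4) * (norm v)^2)"
      unfolding mult_exp_exp by (rule arg_cong[where f=exp]) (simp add: field_simps)
    then show ?thesis by (simp only: mult.assoc)
  qed
  finally show ?thesis unfolding C_def .
qed

lemma maxw_moment_integrable:
  fixes ma th :: real and u :: vec3
  assumes ma: "ma > 0" and th: "th > 0"
  shows "integrable lborel (\<lambda>v. (1 + norm v) * Maxw ma u th v)"
proof (rule Bochner_Integration.integrable_bound)
  define k where "k = ma / (2 * th)"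
  have k: "k > 0" using ma th by (simp add: k_def)
  show "integrable lborel (\<lambda>v::vec3. ((ma / (2 * pi * th)) powr (3/2) * (2 + 4 / k) * exp (k * (norm u)^2)) * exp (- (k / 4) * (norm v)^2))"
    using gauss3_integrable[of "k/4"] k by (intro integrable_mult_right) simp
  show "(\<lambda>v. (1 + norm v) * Maxw ma u th v) \<in> borel_measurable lborel" by measurable
  show "AE v in lborel. norm ((1 + norm v) * Maxw ma u th v) \<le> norm (((ma / (2 * pi * th)) powr (3/2) * (2 + 4 / k) * exp (k * (norm u)^2)) * exp (- (k / 4) * (norm v)^2))"
  proof (rule AE_I2)
    fix v :: vec3
    have p: "Maxw ma u th v > 0" using Maxw_pos[OF ma th] .
    have "(1 + norm v) * Maxw ma u th v \<le> ((ma / (2 * pi * th)) powr (3/2) * (2 + 4 / k) * exp (k * (norm u)^2)) * exp (- (k / 4) * (norm v)^2)"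
      using maxw_moment_bound[OF ma th, of v u] unfolding k_def .
    then show "norm ((1 + norm v) * Maxw ma u th v) \<le> norm (((ma / (2 * pi * th)) powr (3/2) * (2 + 4 / k) * exp (k * (norm u)^2)) * exp (- (k / 4) * (norm v)^2))"
      using p k by (simp add: abs_mult)
  qed
qed

lemma maxw_integrable:
  assumes ma: "ma > 0" and th: "th > 0"
  shows "integrable lborel (Maxw ma u th)" "integrable lborel (\<lambda>v. norm v * Maxw ma u th v)"
proof -
  have I: "integrable lborel (\<lambda>v. (1 + norm v) * Maxw ma u th v)" by (rule maxw_moment_integrable[OF ma th])
  have p: "\<And>v. Maxw ma u th v > 0" using Maxw_pos[OF ma th] .
  show "integrable lborel (Maxw ma u th)"
    by (rule Bochner_Integration.integrable_bound[OF I]) (use p in \<open>auto simp: less_imp_le\<close>)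
  show "integrable lborel (\<lambda>v. norm v * Maxw ma u th v)"
    by (rule Bochner_Integration.integrable_bound[OF I]) (use p in \<open>auto simp: less_imp_le abs_mult\<close>)
qed

lemma M1_pos: "m1 > 0 \<Longrightarrow> th1 > 0 \<Longrightarrow> M1 m1 u1 th1 v > 0"
  unfolding M1_def by (rule Maxw_pos)

lemma sigma_nonneg:
  assumes "m1 > 0" "th1 > 0"
  shows "sigma_c m1 u1 th1 v \<ge> 0"
  unfolding sigma_c_def using M1_pos[OF assms]
  by (intro integral_nonneg_AE AE_I2) (simp add: less_imp_le)

lemma sigma_measurable[measurable]:
  "sigma_c m1 u1 th1 \<in> borel_measurable borel"
proof -
  interpret C: sigma_finite_measure coll_measure
    unfolding coll_measure_def
    by (rule sigma_finite_pair_measure) (simp_all add: lborel.sigma_finite_measure_axioms sphere.sigma_finite_measure_axioms)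
  have e: "sets (borel \<Otimes>\<^sub>M coll_measure) = sets (borel \<Otimes>\<^sub>M (borel \<Otimes>\<^sub>M (borel::vec3 measure)) :: (vec3 \<times> vec3 \<times> vec3) measure)"
    by (rule sets_pair_measure_cong[OF refl sets_coll'])
  have f: "(\<lambda>(v, p). \<bar>(v - fst p) \<bullet> snd p\<bar> * M1 m1 u1 th1 (fst p)) \<in> borel_measurable (borel \<Otimes>\<^sub>M (borel \<Otimes>\<^sub>M (borel::vec3 measure)) :: (vec3 \<times> vec3 \<times> vec3) measure)"
    unfolding M1_def by measurable
  have "(\<lambda>v. \<integral>p. \<bar>(v - fst p) \<bullet> snd p\<bar> * M1 m1 u1 th1 (fst p) \<partial>coll_measure) \<in> borel_measurable borel"
    by (rule C.borel_measurable_lebesgue_integral) (unfold measurable_cong_sets[OF e refl], rule f)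
  then show ?thesis unfolding sigma_c_def[abs_def] .
qed

lemma sigma_bound:
  assumes m1: "m1 > 0" and th1: "th1 > 0"
  shows "\<exists>A B. A \<ge> 0 \<and> B \<ge> 0 \<and> (\<forall>v. sigma_c m1 u1 th1 v \<le> A + B * norm v)"
proof -
  define f where "f = M1 m1 u1 th1"
  have fpos: "f w > 0" for w unfolding f_def by (rule M1_pos[OF m1 th1])
  have I0i: "integrable lborel f" unfolding f_def M1_def by (rule maxw_integrable(1)[OF m1 th1])
  have I1i: "integrable lborel (\<lambda>w. norm w * f w)" unfolding f_def M1_def by (rule maxw_integrable(2)[OF m1 th1])
  define I0 where "I0 = (\<integral>w. f w \<partial>lborel)"
  define I1 where "I1 = (\<integral>w. norm w * f w \<partial>lborel)"
  have I0: "I0 \<ge> 0" unfolding I0_def using fpos by (intro integral_nonneg_AE AE_I2) (simp add: less_imp_le)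
  have I1: "I1 \<ge> 0" unfolding I1_def using fpos by (intro integral_nonneg_AE AE_I2) (simp add: less_imp_le)
  define S where "S = emeasure sphere_measure UNIV"
  have Sfin: "S < \<infinity>" unfolding S_def by (metis sphere.emeasure_finite less_top infinity_ennreal_def)
  have fm[measurable]: "f \<in> borel_measurable borel" unfolding f_def M1_def by measurable
  have bound: "sigma_c m1 u1 th1 v \<le> (norm v * I0 + I1) * enn2real S" for v
  proof -
    have Fm: "(\<lambda>p. ennreal (\<bar>(v - fst p) \<bullet> snd p\<bar> * f (fst p))) \<in> borel_measurable (lborel \<Otimes>\<^sub>M sphere_measure)"
      by (rule coll_meas') measurable
    have ii: "integrable lborel (\<lambda>w. norm v * f w + norm w * f w)"
      using I0i I1i by (intro Bochner_Integration.integrable_add integrable_mult_right)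
    have ie: "(\<integral>w. norm v * f w + norm w * f w \<partial>lborel) = norm v * I0 + I1"
      unfolding I0_def I1_def using I0i I1i by (simp add: integral_add)
    have "(\<integral>\<^sup>+ p. ennreal (\<bar>(v - fst p) \<bullet> snd p\<bar> * f (fst p)) \<partial>coll_measure)
        = (\<integral>\<^sup>+ n. \<integral>\<^sup>+ w. ennreal (\<bar>(v - w) \<bullet> n\<bar> * f w) \<partial>lborel \<partial>sphere_measure)"
      unfolding coll_measure_def by (subst coll.nn_integral_snd[symmetric, OF Fm]) simp
    also have "\<dots> \<le> (\<integral>\<^sup>+ n. \<integral>\<^sup>+ w. ennreal (norm v * f w + norm w * f w) \<partial>lborel \<partial>sphere_measure)"
    proof (rule nn_integral_mono_AE)
      show "AE n in sphere_measure. (\<integral>\<^sup>+ w. ennreal (\<bar>(v - w) \<bullet> n\<bar> * f w) \<partial>lborel) \<le> (\<integral>\<^sup>+ w. ennreal (norm v * f w + norm w * f w) \<partial>lborel)"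
        using AE_sphere
      proof eventually_elim
        case (elim n)
        then have n1: "norm n \<le> 1" by auto
        show ?case
        proof (rule nn_integral_mono)
          fix w
          have "\<bar>(v - w) \<bullet> n\<bar> \<le> norm (v - w) * norm n" by (rule Cauchy_Schwarz_ineq2)
          also have "\<dots> \<le> norm (v - w)" using n1 by (simp add: mult_left_le)
          also have "\<dots> \<le> norm v + norm w" by (rule norm_triangle_ineq4)
          finally have "\<bar>(v - w) \<bullet> n\<bar> * f w \<le> (norm v + norm w) * f w"
            using fpos[of w] by (intro mult_right_mono) auto
          then show "ennreal (\<bar>(v - w) \<bullet> n\<bar> * f w) \<le> ennreal (norm v * f w + norm w * f w)"
            by (intro ennreal_leI) (simp add: distrib_right)
        qed
      qed
    qed
    also have "\<dots> = (\<integral>\<^sup>+ n. ennreal (norm v * I0 + I1) \<partial>sphere_measure)"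
    proof (rule nn_integral_cong)
      fix n
      show "(\<integral>\<^sup>+ w. ennreal (norm v * f w + norm w * f w) \<partial>lborel) = ennreal (norm v * I0 + I1)"
        using nn_integral_eq_integral[OF ii] fpos ie by (simp add: less_imp_le)
    qed
    also have "\<dots> = ennreal (norm v * I0 + I1) * S"
      by (simp add: S_def)
    finally have le: "(\<integral>\<^sup>+ p. ennreal (\<bar>(v - fst p) \<bullet> snd p\<bar> * f (fst p)) \<partial>coll_measure) \<le> ennreal (norm v * I0 + I1) * S" .
    have "sigma_c m1 u1 th1 v = enn2real (\<integral>\<^sup>+ p. ennreal (\<bar>(v - fst p) \<bullet> snd p\<bar> * f (fst p)) \<partial>coll_measure)"
      unfolding sigma_c_def f_def[symmetric]
    proof (rule integral_eq_nn_integral)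
      show "(\<lambda>p. \<bar>(v - fst p) \<bullet> snd p\<bar> * f (fst p)) \<in> borel_measurable coll_measure"
        by (rule coll_meas) measurable
      show "AE p in coll_measure. 0 \<le> \<bar>(v - fst p) \<bullet> snd p\<bar> * f (fst p)"
        using fpos by (intro AE_I2) (simp add: less_imp_le)
    qed
    also have "\<dots> \<le> enn2real (ennreal (norm v * I0 + I1) * S)"
      using le Sfin by (intro enn2real_mono) (auto simp: ennreal_mult_less_top)
    also have "\<dots> = (norm v * I0 + I1) * enn2real S"
      using I0 I1 by (simp add: enn2real_mult del: ennreal_plus)
    finally show ?thesis .
  qed
  show ?thesis
  proof (intro exI conjI allI)
    show "0 \<le> I1 * enn2real S" "0 \<le> I0 * enn2real S" using I0 I1 by auto
    fix v show "sigma_c m1 u1 th1 v \<le> I1 * enn2real S + I0 * enn2real S * norm v"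
      using bound[of v] by (simp add: algebra_simps)
  qed
qed


lemma sigmaM_integrable:
  assumes prm: "m > 0" "m1 > 0" "0 < eps" "eps < 1" "th1 > 0"
  shows "integrable lborel (\<lambda>v. sigma_c m1 u1 th1 v * Meq m m1 eps u1 th1 v)"
    "integrable lborel (Meq m m1 eps u1 th1)"
proof -
  note P = params[OF prm]
  have Mpos: "Meq m m1 eps u1 th1 v > 0" for v
    unfolding Meq_def using Maxw_pos[of m "theta_sharp m m1 eps th1"] P prm by auto
  have I: "integrable lborel (\<lambda>v. (1 + norm v) * Meq m m1 eps u1 th1 v)"
    unfolding Meq_def by (rule maxw_moment_integrable) (use P prm in auto)
  show "integrable lborel (Meq m m1 eps u1 th1)"
    unfolding Meq_def by (rule maxw_integrable(1)) (use P prm in auto)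
  obtain A B where AB: "A \<ge> 0" "B \<ge> 0" "\<And>v. sigma_c m1 u1 th1 v \<le> A + B * norm v"
    using sigma_bound[OF prm(2) prm(5), of u1] by blast
  show "integrable lborel (\<lambda>v. sigma_c m1 u1 th1 v * Meq m m1 eps u1 th1 v)"
  proof (rule Bochner_Integration.integrable_bound)
    show "integrable lborel (\<lambda>v. (A + B) * ((1 + norm v) * Meq m m1 eps u1 th1 v))"
      using I by (rule integrable_mult_right)
    show "(\<lambda>v. sigma_c m1 u1 th1 v * Meq m m1 eps u1 th1 v) \<in> borel_measurable lborel"
      unfolding Meq_def by measurable
    show "AE v in lborel. norm (sigma_c m1 u1 th1 v * Meq m m1 eps u1 th1 v) \<le> norm ((A + B) * ((1 + norm v) * Meq m m1 eps u1 th1 v))"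
    proof (rule AE_I2)
      fix v
      have s0: "sigma_c m1 u1 th1 v \<ge> 0" by (rule sigma_nonneg[OF prm(2) prm(5)])
      have "sigma_c m1 u1 th1 v \<le> (A + B) * (1 + norm v)"
      proof -
        have "A * norm v \<ge> 0" using AB(1) by simp
        then have "A + B * norm v \<le> (A + B) * (1 + norm v)" using AB(2) by (simp add: algebra_simps)
        then show ?thesis using AB(3)[of v] by linarith
      qed
      then have "sigma_c m1 u1 th1 v * Meq m m1 eps u1 th1 v \<le> (A + B) * ((1 + norm v) * Meq m m1 eps u1 th1 v)"
        using Mpos[of v] by (simp add: mult.assoc[symmetric] mult_right_mono less_imp_le)
      then show "norm (sigma_c m1 u1 th1 v * Meq m m1 eps u1 th1 v) \<le> norm ((A + B) * ((1 + norm v) * Meq m m1 eps u1 th1 v))"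
        using s0 Mpos[of v] AB by (simp add: abs_mult less_imp_le)
    qed
  qed
qed

lemma pc_int: "pos_contr_C0_semigroup Z \<Longrightarrow> t \<ge> 0 \<Longrightarrow> integrable lborel f \<Longrightarrow> integrable lborel (Z t f)"
  unfolding pos_contr_C0_semigroup_def by (elim conjE) (erule allE[of _ t], simp)

lemma pc_lin: "pos_contr_C0_semigroup Z \<Longrightarrow> t \<ge> 0 \<Longrightarrow> integrable lborel f \<Longrightarrow> integrable lborel g \<Longrightarrow>
   AE v in lborel. Z t (\<lambda>x. a * f x + b * g x) v = a * Z t f v + b * Z t g v"
  unfolding pos_contr_C0_semigroup_def by (elim conjE) (drule spec[of _ t], simp)

lemma pc_cong: "pos_contr_C0_semigroup Z \<Longrightarrow> t \<ge> 0 \<Longrightarrow> integrable lborel f \<Longrightarrow> integrable lborel g \<Longrightarrow>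
   AE v in lborel. f v = g v \<Longrightarrow> AE v in lborel. Z t f v = Z t g v"
  unfolding pos_contr_C0_semigroup_def by (elim conjE) (drule spec[of _ t], simp)

lemma pc_pos: "pos_contr_C0_semigroup Z \<Longrightarrow> t \<ge> 0 \<Longrightarrow> integrable lborel f \<Longrightarrow>
   AE v in lborel. f v \<ge> 0 \<Longrightarrow> AE v in lborel. Z t f v \<ge> 0"
  unfolding pos_contr_C0_semigroup_def by (elim conjE) (drule spec[of _ t], simp)

lemma pc_contr: "pos_contr_C0_semigroup Z \<Longrightarrow> t \<ge> 0 \<Longrightarrow> integrable lborel f \<Longrightarrow> L1norm (Z t f) \<le> L1norm f"
  unfolding pos_contr_C0_semigroup_def by (elim conjE) (drule spec[of _ t], simp)

lemma pc_zero: "pos_contr_C0_semigroup Z \<Longrightarrow> integrable lborel f \<Longrightarrow> AE v in lborel. Z 0 f v = f v"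
  unfolding pos_contr_C0_semigroup_def by (elim conjE) simp

lemma pc_semi: "pos_contr_C0_semigroup Z \<Longrightarrow> t \<ge> 0 \<Longrightarrow> s \<ge> 0 \<Longrightarrow> integrable lborel f \<Longrightarrow>
   AE v in lborel. Z (t + s) f v = Z t (Z s f) v"
  unfolding pos_contr_C0_semigroup_def by (elim conjE) (drule spec[of _ t], simp)

lemma L1_sub_bound:
  assumes Z: "pos_contr_C0_semigroup Z" and M: "integrable lborel M" and t: "t \<ge> 0" and h: "h \<ge> 0"
  shows "L1dist (Z (t + h) M) M \<le> L1dist (Z t M) M + L1dist (Z h M) M"
proof -
  have ZhM: "integrable lborel (Z h M)" using pc_int[OF Z h M] .
  have ZtM: "integrable lborel (Z t M)" using pc_int[OF Z t M] .
  have Zth: "integrable lborel (Z (t + h) M)" using pc_int[OF Z _ M, of "t + h"] t h by simp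
  define D where "D = (\<lambda>x. 1 * Z h M x + (-1) * M x)"
  have Dint: "integrable lborel D" unfolding D_def using ZhM M by (intro Bochner_Integration.integrable_add integrable_mult_right)
  have sg: "AE v in lborel. Z (t + h) M v = Z t (Z h M) v" using pc_semi[OF Z t h M] .
  have lin: "AE v in lborel. Z t D v = 1 * Z t (Z h M) v + (-1) * Z t M v"
    unfolding D_def using pc_lin[OF Z t ZhM M] .
  have con: "L1norm (Z t D) \<le> L1norm D" using pc_contr[OF Z t Dint] .
  have m1[measurable]: "Z (t + h) M \<in> borel_measurable lborel" "Z t M \<in> borel_measurable lborel" "M \<in> borel_measurable lborel"
    "Z h M \<in> borel_measurable lborel"
    using Zth ZtM M ZhM by auto
  have "L1dist (Z (t + h) M) M = (\<integral>\<^sup>+ v. ennreal \<bar>Z (t + h) M v - M v\<bar> \<partial>lborel)" unfolding L1dist_def ..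
  also have "\<dots> \<le> (\<integral>\<^sup>+ v. ennreal \<bar>Z (t + h) M v - Z t M v\<bar> + ennreal \<bar>Z t M v - M v\<bar> \<partial>lborel)"
    by (intro nn_integral_mono) (simp add: ennreal_plus[symmetric] del: ennreal_plus)
  also have "\<dots> = (\<integral>\<^sup>+ v. ennreal \<bar>Z (t + h) M v - Z t M v\<bar> \<partial>lborel) + (\<integral>\<^sup>+ v. ennreal \<bar>Z t M v - M v\<bar> \<partial>lborel)"
    by (rule nn_integral_add) auto
  also have "(\<integral>\<^sup>+ v. ennreal \<bar>Z (t + h) M v - Z t M v\<bar> \<partial>lborel) = L1norm (Z t D)"
    unfolding L1norm_def using sg lin by (intro nn_integral_cong_AE) auto
  also have "\<dots> \<le> L1norm D" by (rule con)
  also have "L1norm D = L1dist (Z h M) M" unfolding L1norm_def L1dist_def D_def by simp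
  finally show ?thesis unfolding L1dist_def by (simp add: add.commute)
qed

lemma L1_mult_bound:
  assumes Z: "pos_contr_C0_semigroup Z" and M: "integrable lborel M" and h: "h \<ge> 0"
  shows "L1dist (Z (real n * h) M) M \<le> of_nat n * L1dist (Z h M) M"
proof (induction n)
  case 0
  have "AE v in lborel. Z 0 M v = M v" using pc_zero[OF Z M] .
  then have "L1dist (Z 0 M) M = 0" unfolding L1dist_def by (subst nn_integral_cong_AE[where v="\<lambda>_. 0"]) auto
  then show ?case by simp
next
  case (Suc n)
  have "L1dist (Z (real (Suc n) * h) M) M = L1dist (Z (real n * h + h) M) M" by (simp add: algebra_simps)
  also have "\<dots> \<le> L1dist (Z (real n * h) M) M + L1dist (Z h M) M"
    using h by (intro L1_sub_bound[OF Z M]) auto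
  also have "\<dots> \<le> of_nat n * L1dist (Z h M) M + L1dist (Z h M) M"
    using Suc by (intro add_right_mono)
  also have "\<dots> = of_nat (Suc n) * L1dist (Z h M) M" by (simp add: algebra_simps)
  finally show ?case .
qed

lemma L1_quot:
  assumes f[measurable]: "f \<in> borel_measurable lborel" and M[measurable]: "M \<in> borel_measurable lborel" and h: "h > 0"
  shows "L1dist f M = ennreal h * L1dist (\<lambda>v. (f v - M v) / h) (\<lambda>v. 0)"
proof -
  have "L1dist (\<lambda>v. (f v - M v) / h) (\<lambda>v. 0) = (\<integral>\<^sup>+ v. ennreal \<bar>f v - M v\<bar> * ennreal (1 / h) \<partial>lborel)"
    unfolding L1dist_def using h by (intro nn_integral_cong) (simp add: ennreal_mult[symmetric] abs_divide)
  also have "\<dots> = L1dist f M * ennreal (1 / h)"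
    unfolding L1dist_def by (rule nn_integral_multc) measurable
  finally have "ennreal h * L1dist (\<lambda>v. (f v - M v) / h) (\<lambda>v. 0) = L1dist f M * (ennreal h * ennreal (1 / h))"
    by (simp add: ac_simps)
  also have "ennreal h * ennreal (1 / h) = 1" using h by (simp add: ennreal_mult[symmetric])
  finally show ?thesis by simp
qed

lemma invariant:
  assumes Z: "pos_contr_C0_semigroup Z" and M: "integrable lborel M"
    and gen: "((\<lambda>t. L1dist (\<lambda>v. (Z t M v - M v) / t) (\<lambda>v. 0)) \<longlongrightarrow> 0) (at_right 0)"
    and t: "t \<ge> 0"
  shows "AE v in lborel. Z t M v = M v"
proof (cases "t = 0")
  case True then show ?thesis using pc_zero[OF Z M] by simp
next
  case False
  then have t0: "t > 0" using t by simp
  define F where "F = (\<lambda>h. L1dist (\<lambda>v. (Z h M v - M v) / h) (\<lambda>v. 0))"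
  define hs where "hs = (\<lambda>n::nat. t / real (Suc n))"
  have hs0: "hs n > 0" for n using t0 by (simp add: hs_def)
  have Mm[measurable]: "M \<in> borel_measurable lborel" using M by auto
  have Zm: "Z h M \<in> borel_measurable lborel" if "h \<ge> 0" for h using pc_int[OF Z that M] by auto
  have seq: "filterlim hs (at_right 0) sequentially"
    unfolding filterlim_at
  proof
    show "hs \<longlonglongrightarrow> 0" unfolding hs_def
      using LIMSEQ_Suc[OF lim_const_over_n[of t]] by simp
    show "\<forall>\<^sub>F n in sequentially. hs n \<in> {0<..} \<and> hs n \<noteq> 0" using hs0 by (simp add: less_imp_neq[symmetric])
  qed
  have Fl: "(\<lambda>n. F (hs n)) \<longlonglongrightarrow> 0"
    using filterlim_compose[OF gen[folded F_def] seq] .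
  have Fl2: "(\<lambda>n. ennreal t * F (hs n)) \<longlonglongrightarrow> ennreal t * 0"
    by (rule ennreal_tendsto_cmult) (use Fl in auto)
  have le: "L1dist (Z t M) M \<le> ennreal t * F (hs n)" for n
  proof -
    have "L1dist (Z t M) M = L1dist (Z (real (Suc n) * hs n) M) M" unfolding hs_def by simp
    also have "\<dots> \<le> of_nat (Suc n) * L1dist (Z (hs n) M) M"
      by (rule L1_mult_bound[OF Z M]) (use hs0 in \<open>simp add: less_imp_le\<close>)
    also have "L1dist (Z (hs n) M) M = ennreal (hs n) * F (hs n)"
      unfolding F_def by (rule L1_quot[OF Zm Mm hs0]) (use hs0 in \<open>simp add: less_imp_le\<close>)
    also have "of_nat (Suc n) * (ennreal (hs n) * F (hs n)) = ennreal (real (Suc n) * hs n) * F (hs n)"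
      using hs0[of n] by (simp add: ennreal_mult ennreal_of_nat_eq_real_of_nat mult.assoc)
    also have "real (Suc n) * hs n = t" unfolding hs_def by simp
    finally show ?thesis .
  qed
  have "L1dist (Z t M) M \<le> ennreal t * 0"
    by (rule LIMSEQ_le_const[OF Fl2]) (use le in auto)
  then have z: "(\<integral>\<^sup>+ v. ennreal \<bar>Z t M v - M v\<bar> \<partial>lborel) = 0" unfolding L1dist_def by simp
  have "AE v in lborel. ennreal \<bar>Z t M v - M v\<bar> = 0"
    using z by (subst (asm) nn_integral_0_iff_AE) (use Zm[OF t] in auto)
  then show ?thesis by eventually_elim simp
qed

lemma young_ineq:
  fixes x a :: real assumes x: "x > 0"
  shows "a * x - exp (a - 1) \<le> x * ln x"
proof -
  have "1 + (a - 1 - ln x) \<le> exp (a - 1 - ln x)" by (rule exp_ge_add_one_self)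
  also have "exp (a - 1 - ln x) = exp (a - 1) / x" using x by (simp add: exp_diff)
  finally have "x * (a - ln x) \<le> x * (exp (a - 1) / x)" using x by (intro mult_left_mono) auto
  then show ?thesis using x by (simp add: algebra_simps)
qed

lemma xlnx_lower:
  fixes x :: real assumes x: "x > 0"
  shows "x * ln x \<ge> - exp (- 1)"
  using young_ineq[OF x, of 0] by simp

lemma rat_bound_extend:
  fixes y m c :: real
  assumes "\<forall>a\<in>\<rat>. a * y - exp (a - 1) * m \<le> c"
  shows "a * y - exp (a - 1) * m \<le> c"
proof -
  have cl: "closed {a::real. a * y - exp (a - 1) * m \<le> c}"
    by (intro closed_Collect_le continuous_intros)
  have "\<rat> \<subseteq> {a::real. a * y - exp (a - 1) * m \<le> c}" using assms by auto
  then have "closure \<rat> \<subseteq> {a::real. a * y - exp (a - 1) * m \<le> c}"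
    using cl by (rule closure_minimal)
  then show ?thesis unfolding Rats_closure_real by auto
qed

lemma pointwise_jensen:
  fixes y m c :: real
  assumes m: "m > 0" and y: "y \<ge> 0" and H: "\<forall>a\<in>\<rat>. a * y - exp (a - 1) * m \<le> c"
  shows "(if y = 0 then 0 else y * ln y - y * ln m) \<le> c"
proof (cases "y = 0")
  case True
  show ?thesis
  proof (rule ccontr)
    assume "\<not> ?thesis"
    then have c: "c < 0" using True by simp
    define a where "a = 1 + ln (- c / (2 * m))"
    have "a * y - exp (a - 1) * m \<le> c" by (rule rat_bound_extend[OF H])
    moreover have "exp (a - 1) = - c / (2 * m)" unfolding a_def using c m by (simp add: divide_neg_pos)
    ultimately have "c / 2 \<le> c" using True m by simp
    then show False using c by simp
  qed
next
  case False
  then have y0: "y > 0" using y by simp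
  define a where "a = 1 + ln (y / m)"
  have "a * y - exp (a - 1) * m \<le> c" by (rule rat_bound_extend[OF H])
  moreover have "exp (a - 1) = y / m" unfolding a_def using y0 m by simp
  ultimately have "(1 + ln (y / m)) * y - y \<le> c" using m unfolding a_def by simp
  then show ?thesis using False y0 m by (simp add: ln_div algebra_simps)
qed

definition hI :: "(vec3 \<Rightarrow> real) \<Rightarrow> (vec3 \<Rightarrow> real) \<Rightarrow> vec3 \<Rightarrow> real" where
  "hI f M v = (if f v = 0 then 0 else f v * ln (f v) - f v * ln (M v))"

lemma info_integrand_hI: "M v > 0 \<Longrightarrow> info_integrand f M v = ereal (hI f M v)"
  unfolding info_integrand_def hI_def by simp

lemma hI_meas[measurable]:
  assumes [measurable]: "f \<in> borel_measurable lborel" "M \<in> borel_measurable lborel"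
  shows "hI f M \<in> borel_measurable lborel"
  unfolding hI_def[abs_def] by measurable

lemma hI_young:
  assumes M: "M v > 0" and f: "f v \<ge> 0"
  shows "a * f v - exp (a - 1) * M v \<le> hI f M v"
proof (cases "f v = 0")
  case True then show ?thesis using M by (simp add: hI_def)
next
  case False
  then have f0: "f v > 0" using f by simp
  define x where "x = f v / M v"
  have x: "x > 0" using f0 M by (simp add: x_def)
  have "M v * (a * x - exp (a - 1)) \<le> M v * (x * ln x)"
    using young_ineq[OF x, of a] M by (intro mult_left_mono) auto
  moreover have "M v * (a * x - exp (a - 1)) = a * f v - exp (a - 1) * M v"
    using M by (simp add: x_def field_simps)
  moreover have "M v * (x * ln x) = hI f M v"
    using M f0 False by (simp add: x_def hI_def ln_div algebra_simps)
  ultimately show ?thesis by simp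
qed

lemma hI_lower:
  assumes M: "M v > 0" and f: "f v \<ge> 0"
  shows "- exp (- 1) * M v \<le> hI f M v"
  using hI_young[of M v f 0, OF M f] by simp

lemma Info_h:
  assumes "\<And>v. info_integrand f M v = ereal (h v)"
  shows "Info f M = enn2ereal (\<integral>\<^sup>+ v. ennreal (h v) \<partial>lborel) - enn2ereal (\<integral>\<^sup>+ v. ennreal (- h v) \<partial>lborel)"
proof -
  have e1: "e2ennreal (max 0 (info_integrand f M v)) = ennreal (h v)" for v
  proof -
    have "max 0 (ereal (h v)) = ereal (max 0 (h v))" by (auto simp: max_def)
    then show ?thesis unfolding assms by (simp only: e2ennreal_ereal ennreal_max_0)
  qed
  have e2: "e2ennreal (max 0 (- info_integrand f M v)) = ennreal (- h v)" for v
  proof -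
    have "max 0 (- ereal (h v)) = ereal (max 0 (- h v))" by (auto simp: max_def)
    moreover have "- ereal (h v) = ereal (- h v)" by simp
    ultimately show ?thesis unfolding assms by (simp only: e2ennreal_ereal ennreal_max_0)
  qed
  show ?thesis unfolding Info_def e1 e2 ..
qed


lemma Info_eq_integral:
  assumes Mpos: "\<And>v. M v > 0" and hi: "integrable lborel (hI f M)"
  shows "Info f M = ereal (\<integral>v. hI f M v \<partial>lborel)"
proof -
  define h where "h = hI f M"
  have hi': "integrable lborel h" using hi unfolding h_def .
  have I: "Info f M = enn2ereal (\<integral>\<^sup>+ v. ennreal (h v) \<partial>lborel) - enn2ereal (\<integral>\<^sup>+ v. ennreal (- h v) \<partial>lborel)"
    by (rule Info_h) (simp add: info_integrand_hI[OF Mpos] h_def)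
  have P: "(\<integral>\<^sup>+ v. ennreal (h v) \<partial>lborel) \<noteq> \<infinity>" and N: "(\<integral>\<^sup>+ v. ennreal (- h v) \<partial>lborel) \<noteq> \<infinity>"
    using hi' unfolding real_integrable_def by auto
  have fin: "enn2ereal X = ereal (enn2real X)" if "X \<noteq> \<infinity>" for X
  proof -
    have "X < top" using that by (simp add: less_top[symmetric])
    then have "ennreal (enn2real X) = X" by (rule ennreal_enn2real)
    then have "enn2ereal X = enn2ereal (ennreal (enn2real X))" by simp
    also have "\<dots> = ereal (enn2real X)" by (rule enn2ereal_ennreal) simp
    finally show ?thesis .
  qed
  have "Info f M = ereal (enn2real (\<integral>\<^sup>+ v. ennreal (h v) \<partial>lborel)) - ereal (enn2real (\<integral>\<^sup>+ v. ennreal (- h v) \<partial>lborel))"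
    unfolding I fin[OF P] fin[OF N] ..
  also have "\<dots> = ereal (\<integral>v. h v \<partial>lborel)"
    using real_lebesgue_integral_def[OF hi'] by simp
  finally show ?thesis unfolding h_def .
qed

lemma Info_cases:
  assumes Mpos: "\<And>v. M v > 0" and Mi: "integrable lborel M"
    and fm: "f \<in> borel_measurable lborel" and fnn: "AE v in lborel. f v \<ge> 0"
  shows "Info f M = \<infinity> \<or> (integrable lborel (hI f M) \<and> Info f M = ereal (\<integral>v. hI f M v \<partial>lborel))"
proof -
  have Mm[measurable]: "M \<in> borel_measurable lborel" using Mi by auto
  have fm'[measurable]: "f \<in> borel_measurable lborel" by (rule fm)
  define h where "h = hI f M"
  have hm[measurable]: "h \<in> borel_measurable lborel" unfolding h_def by measurable
  have I: "Info f M = enn2ereal (\<integral>\<^sup>+ v. ennreal (h v) \<partial>lborel) - enn2ereal (\<integral>\<^sup>+ v. ennreal (- h v) \<partial>lborel)"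
    by (rule Info_h) (simp add: info_integrand_hI[OF Mpos] h_def)
  have "(\<integral>\<^sup>+ v. ennreal (- h v) \<partial>lborel) \<le> (\<integral>\<^sup>+ v. ennreal (exp (- 1) * M v) \<partial>lborel)"
  proof (rule nn_integral_mono_AE)
    show "AE v in lborel. ennreal (- h v) \<le> ennreal (exp (- 1) * M v)"
      using fnn
    proof eventually_elim
      case (elim v)
      have "- exp (- 1) * M v \<le> hI f M v" by (rule hI_lower[of M v f, OF Mpos elim])
      then show ?case unfolding h_def by (intro ennreal_leI) linarith
    qed
  qed
  also have "\<dots> < \<infinity>"
  proof -
    have "integrable lborel (\<lambda>v. exp (- 1) * M v)" using Mi by (rule integrable_mult_right)
    then have "(\<integral>\<^sup>+ v. ennreal (exp (- 1) * M v) \<partial>lborel) \<noteq> \<infinity>" by (rule integrableD)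
    then show ?thesis by (simp add: less_top)
  qed
  finally have N: "(\<integral>\<^sup>+ v. ennreal (- h v) \<partial>lborel) \<noteq> \<infinity>" by simp
  show ?thesis
  proof (cases "(\<integral>\<^sup>+ v. ennreal (h v) \<partial>lborel) = \<infinity>")
    case True
    have "enn2ereal (\<integral>\<^sup>+ v. ennreal (- h v) \<partial>lborel) \<noteq> \<infinity>" using N by simp
    then show ?thesis unfolding I using True by simp
  next
    case False
    have hi: "integrable lborel h" unfolding real_integrable_def using False N by simp
    have "Info f M = ereal (enn2real (\<integral>\<^sup>+ v. ennreal (h v) \<partial>lborel)) - ereal (enn2real (\<integral>\<^sup>+ v. ennreal (- h v) \<partial>lborel))"
    proof -
      have fin: "enn2ereal X = ereal (enn2real X)" if "X \<noteq> \<infinity>" for X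
      proof -
        have "X < top" using that by (simp add: less_top[symmetric])
        then have "ennreal (enn2real X) = X" by (rule ennreal_enn2real)
        then have "enn2ereal X = enn2ereal (ennreal (enn2real X))" by simp
        also have "\<dots> = ereal (enn2real X)" by (rule enn2ereal_ennreal) simp
        finally show ?thesis .
      qed
      show ?thesis unfolding I fin[OF False] fin[OF N] ..
    qed
    also have "\<dots> = ereal (\<integral>v. h v \<partial>lborel)"
      using real_lebesgue_integral_def[OF hi] by simp
    finally show ?thesis using hi unfolding h_def by simp
  qed
qed

lemma Info_cong_AE:
  assumes "AE v in lborel. f v = g v"
  shows "Info f M = Info g M"
proof -
  have "AE v in lborel. info_integrand f M v = info_integrand g M v"
    using assms by eventually_elim (simp add: info_integrand_def)
  then have "(\<integral>\<^sup>+ v. e2ennreal (max 0 (info_integrand f M v)) \<partial>lborel) = (\<integral>\<^sup>+ v. e2ennreal (max 0 (info_integrand g M v)) \<partial>lborel)"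
       "(\<integral>\<^sup>+ v. e2ennreal (max 0 (- info_integrand f M v)) \<partial>lborel) = (\<integral>\<^sup>+ v. e2ennreal (max 0 (- info_integrand g M v)) \<partial>lborel)"
    by (auto intro!: nn_integral_cong_AE elim!: eventually_mono)
  then show ?thesis unfolding Info_def by simp
qed

lemma integral_le_L1norm:
  assumes "integrable lborel g"
  shows "(\<integral>v. g v \<partial>lborel) \<le> enn2real (L1norm g)"
proof -
  have gm[measurable]: "g \<in> borel_measurable lborel" using assms by auto
  have "(\<integral>v. g v \<partial>lborel) \<le> (\<integral>v. \<bar>g v\<bar> \<partial>lborel)"
    using assms by (intro integral_mono) auto
  also have "\<dots> = enn2real (L1norm g)"
    unfolding L1norm_def by (rule integral_eq_nn_integral) auto
  finally show ?thesis .
qed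

lemma entropy_decrease:
  assumes Z: "pos_contr_C0_semigroup Z" and Mpos: "\<And>v. M v > 0" and Mi: "integrable lborel M"
    and t: "t \<ge> 0" and inv: "AE v in lborel. Z t M v = M v"
    and fi: "integrable lborel f" and fnn: "AE v in lborel. f v \<ge> 0"
  shows "Info (Z t f) M \<le> Info f M"
proof -
  have Mm[measurable]: "M \<in> borel_measurable lborel" using Mi by auto
  have fm[measurable]: "f \<in> borel_measurable lborel" using fi by auto
  from Info_cases[OF Mpos Mi fm fnn]
  show ?thesis
  proof
    assume "Info f M = \<infinity>" then show ?thesis by simp
  next
    assume "integrable lborel (hI f M) \<and> Info f M = ereal (\<integral>v. hI f M v \<partial>lborel)"
    then have hi: "integrable lborel (hI f M)" and If: "Info f M = ereal (\<integral>v. hI f M v \<partial>lborel)" by auto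
    define h where "h = hI f M"
    have hi': "integrable lborel h" using hi unfolding h_def .
    have Pfi: "integrable lborel (Z t f)" by (rule pc_int[OF Z t fi])
    have Pfm[measurable]: "Z t f \<in> borel_measurable lborel" using Pfi by auto
    have Phi: "integrable lborel (Z t h)" by (rule pc_int[OF Z t hi'])
    have Pfnn: "AE v in lborel. Z t f v \<ge> 0" by (rule pc_pos[OF Z t fi fnn])
    have rat: "AE v in lborel. a * Z t f v - exp (a - 1) * M v \<le> Z t h v" for a
    proof -
      define k where "k = (\<lambda>x. a * f x + (- exp (a - 1)) * M x)"
      define d where "d = (\<lambda>x. 1 * h x + (-1) * k x)"
      have ki: "integrable lborel k" unfolding k_def using fi Mi
        by (intro Bochner_Integration.integrable_add integrable_mult_right)
      have di: "integrable lborel d" unfolding d_def using hi' ki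
        by (intro Bochner_Integration.integrable_add integrable_mult_right)
      have dnn: "AE v in lborel. d v \<ge> 0"
        using fnn
      proof eventually_elim
        case (elim v)
        have "a * f v - exp (a - 1) * M v \<le> hI f M v" by (rule hI_young[of M v f a, OF Mpos elim])
        then show ?case unfolding d_def k_def h_def by simp
      qed
      have l1: "AE v in lborel. Z t d v = 1 * Z t h v + (-1) * Z t k v"
        unfolding d_def by (rule pc_lin[OF Z t hi' ki])
      have l2: "AE v in lborel. Z t k v = a * Z t f v + (- exp (a - 1)) * Z t M v"
        unfolding k_def by (rule pc_lin[OF Z t fi Mi])
      have l3: "AE v in lborel. Z t d v \<ge> 0" by (rule pc_pos[OF Z t di dnn])
      from l1 l2 l3 inv show ?thesis by eventually_elim simp
    qed
    have "AE v in lborel. \<forall>a\<in>\<rat>. a * Z t f v - exp (a - 1) * M v \<le> Z t h v"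
      using rat by (subst AE_ball_countable[OF countable_rat]) blast
    then have J: "AE v in lborel. hI (Z t f) M v \<le> Z t h v"
      using Pfnn
    proof eventually_elim
      case (elim v)
      show ?case unfolding hI_def
        by (rule pointwise_jensen[OF Mpos elim(2)]) (use elim(1) in auto)
    qed
    have Lo: "AE v in lborel. - exp (- 1) * M v \<le> hI (Z t f) M v"
      using Pfnn by eventually_elim (rule hI_lower[OF Mpos])
    have hPi: "integrable lborel (hI (Z t f) M)"
    proof (rule Bochner_Integration.integrable_bound)
      show "integrable lborel (\<lambda>v. \<bar>Z t h v\<bar> + exp (- 1) * M v)"
        using Phi Mi by (intro Bochner_Integration.integrable_add integrable_mult_right integrable_abs)
      show "hI (Z t f) M \<in> borel_measurable lborel" by measurable
      show "AE v in lborel. norm (hI (Z t f) M v) \<le> norm (\<bar>Z t h v\<bar> + exp (- 1) * M v)"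
        using J Lo
      proof eventually_elim
        case (elim v)
        have "0 < exp (- 1) * M v" using Mpos[of v] by simp
        then show ?case using elim by (simp add: abs_le_iff) linarith
      qed
    qed
    have IP: "Info (Z t f) M = ereal (\<integral>v. hI (Z t f) M v \<partial>lborel)"
      by (rule Info_eq_integral[OF Mpos hPi])
    have s1: "(\<integral>v. hI (Z t f) M v \<partial>lborel) \<le> (\<integral>v. Z t h v \<partial>lborel)"
      by (rule integral_mono_AE[OF hPi Phi J])
    have s2: "(\<integral>v. Z t h v \<partial>lborel) \<le> (\<integral>v. h v \<partial>lborel)"
    proof -
      define q where "q = (\<lambda>x. 1 * h x + exp (- 1) * M x)"
      have qi: "integrable lborel q" unfolding q_def using hi' Mi
        by (intro Bochner_Integration.integrable_add integrable_mult_right)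
      have qnn: "AE v in lborel. q v \<ge> 0"
        using fnn
      proof eventually_elim
        case (elim v)
        have "- exp (- 1) * M v \<le> hI f M v" by (rule hI_lower[of M v f, OF Mpos elim])
        then show ?case unfolding q_def h_def by simp
      qed
      have Pqi: "integrable lborel (Z t q)" by (rule pc_int[OF Z t qi])
      have lq: "AE v in lborel. Z t q v = 1 * Z t h v + exp (- 1) * Z t M v"
        unfolding q_def by (rule pc_lin[OF Z t hi' Mi])
      have "AE v in lborel. Z t q v = Z t h v + exp (- 1) * M v"
        using lq inv by eventually_elim simp
      then have "(\<integral>v. Z t q v \<partial>lborel) = (\<integral>v. Z t h v + exp (- 1) * M v \<partial>lborel)"
        by (rule integral_cong_AE[rotated 2]) (use Pqi Phi Mi in auto)
      also have "\<dots> = (\<integral>v. Z t h v \<partial>lborel) + exp (- 1) * (\<integral>v. M v \<partial>lborel)"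
        using Phi Mi by (simp add: integral_add)
      finally have e1: "(\<integral>v. Z t q v \<partial>lborel) = (\<integral>v. Z t h v \<partial>lborel) + exp (- 1) * (\<integral>v. M v \<partial>lborel)" .
      have "(\<integral>v. Z t q v \<partial>lborel) \<le> enn2real (L1norm (Z t q))" by (rule integral_le_L1norm[OF Pqi])
      also have "\<dots> \<le> enn2real (L1norm q)"
      proof (rule enn2real_mono)
        show "L1norm (Z t q) \<le> L1norm q" by (rule pc_contr[OF Z t qi])
        have "(\<integral>\<^sup>+ v. ennreal (norm (q v)) \<partial>lborel) < \<infinity>" using qi by (simp add: integrable_iff_bounded)
        then show "L1norm q < top" unfolding L1norm_def by simp
      qed
      also have "enn2real (L1norm q) = (\<integral>v. \<bar>q v\<bar> \<partial>lborel)"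
        unfolding L1norm_def using qi by (subst integral_eq_nn_integral) auto
      also have "\<dots> = (\<integral>v. q v \<partial>lborel)"
        using qnn by (intro integral_cong_AE) (use qi in auto)
      also have "\<dots> = (\<integral>v. h v \<partial>lborel) + exp (- 1) * (\<integral>v. M v \<partial>lborel)"
        unfolding q_def using hi' Mi by (simp add: integral_add)
      finally show ?thesis unfolding e1 by simp
    qed
    show ?thesis unfolding IP If using s1 s2 unfolding h_def by simp
  qed
qed

theorem theorem4p6:
  fixes m m1 eps th1 :: real and u1 :: vec3
    and Z :: "real \<Rightarrow> (vec3 \<Rightarrow> real) \<Rightarrow> (vec3 \<Rightarrow> real)"
    and f0 :: "vec3 \<Rightarrow> real"
  assumes "m > 0" and "m1 > 0" and "0 < eps" and "eps < 1" and "th1 > 0"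
    and "minimal_semigroup m m1 eps u1 th1 Z"
    and "integrable lborel f0"
    and "\<forall>v. f0 v \<ge> 0"
    and "(\<integral>v. f0 v \<partial>lborel) = 1"
    and "Info f0 (Meq m m1 eps u1 th1) < \<infinity>"
  shows "\<forall>s t. 0 \<le> s \<longrightarrow> s \<le> t \<longrightarrow>
           Info (Z t f0) (Meq m m1 eps u1 th1) \<le> Info (Z s f0) (Meq m m1 eps u1 th1)"
proof (intro allI impI)
  fix s t :: real assume s: "0 \<le> s" and st: "s \<le> t"
  note prm = assms(1-5)
  note P = params[OF prm]
  define M where "M = Meq m m1 eps u1 th1"
  have Z: "pos_contr_C0_semigroup Z" and G: "generator_extends_A m m1 eps u1 th1 Z"
    using assms(6) unfolding minimal_semigroup_def by auto
  have Mpos: "\<And>v. M v > 0"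
    unfolding M_def Meq_def using Maxw_pos[of m "theta_sharp m m1 eps th1"] P prm by auto
  have Mi: "integrable lborel M" unfolding M_def by (rule sigmaM_integrable(2)[OF prm])
  have sMi: "integrable lborel (\<lambda>v. sigma_c m1 u1 th1 v * M v)" unfolding M_def by (rule sigmaM_integrable(1)[OF prm])
  have A0: "(\<lambda>v. - sigma_c m1 u1 th1 v * M v + Qplus m m1 eps u1 th1 M v) = (\<lambda>v. 0)"
    unfolding M_def by (simp add: Qplus_Meq[OF prm] fun_eq_iff)
  have gen: "((\<lambda>t. L1dist (\<lambda>v. (Z t M v - M v) / t) (\<lambda>v. 0)) \<longlongrightarrow> 0) (at_right 0)"
    using G Mi sMi unfolding generator_extends_A_def A0[symmetric] by blast
  have inv: "AE v in lborel. Z \<tau> M v = M v" if "\<tau> \<ge> 0" for \<tau>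
    by (rule invariant[OF Z Mi gen that])
  define f where "f = Z s f0"
  have fi: "integrable lborel f" unfolding f_def by (rule pc_int[OF Z s assms(7)])
  have fnn: "AE v in lborel. f v \<ge> 0" unfolding f_def
    by (rule pc_pos[OF Z s assms(7)]) (use assms(8) in auto)
  have ts: "t - s \<ge> 0" using st by simp
  have "AE v in lborel. Z ((t - s) + s) f0 v = Z (t - s) (Z s f0) v"
    by (rule pc_semi[OF Z ts s assms(7)])
  then have "AE v in lborel. Z t f0 v = Z (t - s) f v" unfolding f_def by simp
  then have "Info (Z t f0) M = Info (Z (t - s) f) M" by (rule Info_cong_AE)
  also have "\<dots> \<le> Info f M"
    by (rule entropy_decrease[OF Z Mpos Mi ts inv[OF ts] fi fnn])
  finally show "Info (Z t f0) (Meq m m1 eps u1 th1) \<le> Info (Z s f0) (Meq m m1 eps u1 th1)"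
    unfolding M_def f_def .
qed

end
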